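(* Let $\mathbf P=(P,\leq,{}',0,1)$ be an orthogonal poset which is a Boolean poset, where the antitone involution ${}'$ is the complementation of $P$ (i.e. $x'$ is the complement of $x$ for each $x\in P$). Then $\mathbf P$ is an orthomodular poset, i.e. for all $x,y\in P$ with $x\leq y$ we have $x\vee(y\wedge x')=y$.
   Context: For a subset $A$ of a poset $(P,\le)$, $L(A)=\{z\in P: z\le a \text{ for all } a\in A\}$ and $U(A)=\{z\in P: a\le z \text{ for all } a\in A\}$; we write $L(x,y)$ for $L(\{x,y\})$, $LU(A)$ for $L(U(A))$, $L(A,z)$ for $L(A\cup\{z\})$, etc. A bounded poset $(P,\le,{}',0,1)$ with an antitone involution means ${}'$ satisfies $x\le y\Rightarrow y'\le x'$ and $x''=x$. Elements $x,y$ are orthogonal, $x\perp y$, if $x\le y'$. The poset is orthogonal if $x\vee y$ (supremum) exists whenever $x\perp y$. An element $y$ is a complement of $x$ if $L(x,y)=L(P)$ and $U(x,y)=U(P)$; the poset is complemented if every element has a complement. The poset is distributive if $L(U(x,y),z)=LU(L(x,z),L(y,z))$ for all $x,y,z$ (equivalently any of the dual LU-identities), and Boolean if it is distributive and complemented. An orthomodular poset is an orthogonal poset satisfying: $x\le y$ implies $x\vee(y\wedge x')=y$ (here $y\wedge x'=(y'\vee x)'$ exists by orthogonality). *)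

theory Defs
  imports Main
begin

text \<open>Posets are represented as types of class order; the whole type is the carrier P.\<close>

definition Lb :: "'a::order set \<Rightarrow> 'a set" where
  "Lb A = {z. \<forall>a\<in>A. z \<le> a}"

definition Ub :: "'a::order set \<Rightarrow> 'a set" where
  "Ub A = {z. \<forall>a\<in>A. a \<le> z}"

definition is_sup :: "'a::order \<Rightarrow> 'a \<Rightarrow> 'a \<Rightarrow> bool" where
  "is_sup x y s \<longleftrightarrow> x \<le> s \<and> y \<le> s \<and> (\<forall>u. x \<le> u \<and> y \<le> u \<longrightarrow> s \<le> u)"

definition is_inf :: "'a::order \<Rightarrow> 'a \<Rightarrow> 'a \<Rightarrow> bool" where
  "is_inf x y m \<longleftrightarrow> m \<le> x \<and> m \<le> y \<and> (\<forall>u. u \<le> x \<and> u \<le> y \<longrightarrow> u \<le> m)"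

definition bounded_poset_ai :: "('a::order \<Rightarrow> 'a) \<Rightarrow> 'a \<Rightarrow> 'a \<Rightarrow> bool" where
  "bounded_poset_ai c z t \<longleftrightarrow> (\<forall>x. z \<le> x \<and> x \<le> t)
     \<and> (\<forall>x y. x \<le> y \<longrightarrow> c y \<le> c x) \<and> (\<forall>x. c (c x) = x)"

definition orthogonal_poset :: "('a::order \<Rightarrow> 'a) \<Rightarrow> 'a \<Rightarrow> 'a \<Rightarrow> bool" where
  "orthogonal_poset c z t \<longleftrightarrow> bounded_poset_ai c z t
     \<and> (\<forall>x y. x \<le> c y \<longrightarrow> (\<exists>s. is_sup x y s))"

definition is_complement :: "'a::order \<Rightarrow> 'a \<Rightarrow> bool" where
  "is_complement x y \<longleftrightarrow> Lb {x, y} = Lb UNIV \<and> Ub {x, y} = Ub UNIV"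

definition complemented_poset :: "'a::order itself \<Rightarrow> bool" where
  "complemented_poset _ \<longleftrightarrow> (\<forall>x::'a. \<exists>y. is_complement x y)"

definition distributive_poset :: "'a::order itself \<Rightarrow> bool" where
  "distributive_poset _ \<longleftrightarrow> (\<forall>x y z::'a.
     Lb (Ub {x, y} \<union> {z}) = Lb (Ub (Lb {x, z} \<union> Lb {y, z})))"

definition boolean_poset :: "'a::order itself \<Rightarrow> bool" where
  "boolean_poset T \<longleftrightarrow> distributive_poset T \<and> complemented_poset T"

definition orthomodular_poset :: "('a::order \<Rightarrow> 'a) \<Rightarrow> 'a \<Rightarrow> 'a \<Rightarrow> bool" where
  "orthomodular_poset c z t \<longleftrightarrow> orthogonal_poset c z t
     \<and> (\<forall>x y. x \<le> y \<longrightarrow> (\<exists>m. is_inf y (c x) m \<and> is_sup x m y))"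

end

theory Submission
  imports Defs
begin

theorem lemma1:
  fixes c :: "'a::order \<Rightarrow> 'a" and z t :: 'a
  assumes "orthogonal_poset c z t"
    and "boolean_poset TYPE('a)"
    and "\<forall>x. is_complement x (c x)"
  shows "orthomodular_poset c z t"
proof -
  have bd: "\<And>x. z \<le> x \<and> x \<le> t" and anti: "\<And>x y. x \<le> y \<Longrightarrow> c y \<le> c x"
    and inv: "\<And>x. c (c x) = x" and orth: "\<And>x y. x \<le> c y \<Longrightarrow> \<exists>s. is_sup x y s"
    using assms(1) unfolding orthogonal_poset_def bounded_poset_ai_def by auto
  have dist: "\<And>x y w::'a. Lb (Ub {x, y} \<union> {w}) = Lb (Ub (Lb {x, w} \<union> Lb {y, w}))"
    using assms(2) unfolding boolean_poset_def distributive_poset_def by blast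
  have comp: "\<And>x. Ub {x, c x} = Ub UNIV"
    using assms(3) unfolding is_complement_def by blast
  have "\<exists>m. is_inf y (c x) m \<and> is_sup x m y" if xy: "x \<le> y" for x y
  proof -
    have "c y \<le> c x" using anti xy by blast
    then obtain s where s: "is_sup (c y) x s" using orth by blast
    define m where "m = c s"
    have minf: "is_inf y (c x) m"
      unfolding is_inf_def m_def
    proof (intro conjI allI impI)
      show "c s \<le> y" using s anti[of "c y" s] inv unfolding is_sup_def by metis
      show "c s \<le> c x" using s anti[of x s] unfolding is_sup_def by blast
      fix u assume u: "u \<le> y \<and> u \<le> c x"
      have "c y \<le> c u" using u anti by blast
      moreover have "x \<le> c u" using u anti[of u "c x"] inv by metis
      ultimately have "s \<le> c u" using s unfolding is_sup_def by blast
      thus "u \<le> c s" using anti[of s "c u"] inv by metis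
    qed
    have "x \<le> c m" using s unfolding m_def is_sup_def by (simp add: inv)
    then obtain w where w: "is_sup x m w" using orth by blast
    have my: "m \<le> y" using minf unfolding is_inf_def by blast
    have wy: "w \<le> y" using w xy my unfolding is_sup_def by blast
    have e1: "Lb (Ub {x, c x} \<union> {y}) = Lb {y}"
      unfolding comp
    proof
      show "Lb (Ub UNIV \<union> {y}) \<subseteq> Lb {y}" unfolding Lb_def by auto
      show "Lb {y} \<subseteq> Lb (Ub UNIV \<union> {y})" unfolding Lb_def Ub_def by (auto intro: order_trans)
    qed
    have e2: "Lb {x, y} = Lb {x}" unfolding Lb_def using xy by auto
    have e3: "Lb {c x, y} = Lb {m}" unfolding Lb_def using minf unfolding is_inf_def
      by (auto intro: order_trans)
    have e4: "Ub (Lb {x} \<union> Lb {m}) = Ub {w}"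
      unfolding Ub_def Lb_def using w unfolding is_sup_def by (auto intro: order_trans)
    have "Lb {y} = Lb (Ub {w})" using dist[of x "c x" y] e1 e2 e3 e4 by simp
    moreover have "y \<in> Lb {y}" unfolding Lb_def by simp
    moreover have "w \<in> Ub {w}" unfolding Ub_def by simp
    ultimately have "y \<le> w" unfolding Lb_def by blast
    hence "w = y" using wy by simp
    thus ?thesis using minf w by blast
  qed
  thus ?thesis using assms(1) unfolding orthomodular_poset_def by blast
qed

end
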